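(* Let $\mathbf{M}\in\mathbb{R}^{n\times n}$ be a constant symmetric positive definite matrix, $V\in\mathcal{C}^1(\mathbb{R}^n,\mathbb{R})$, $\tilde{\mathbf{B}}:\mathbb{R}^{2n+m}\to\mathbb{R}^{n\times p}$, and $\mathbf{g}:\mathbb{R}^n\to\mathbb{R}^m$ a map each of whose components is a polynomial of degree at most two, with Jacobian $\nabla\mathbf{g}(\mathbf{q})\in\mathbb{R}^{m\times n}$. Let $h>0$ and let $(\mathbf{q}^k,\mathbf{v}^k,\boldsymbol{\lambda}^k)_{k=0}^{N}$ and inputs $(\mathbf{u}^{k+1/2})_{k=0}^{N-1}$ satisfy, for every $n=0,\dots,N-1$, with $\square^{n+1/2}:=\tfrac12(\square^{n+1}+\square^n)$ and $\mathbf{x}^{n+1/2}=(\mathbf{q}^{n+1/2},\mathbf{v}^{n+1/2},\boldsymbol{\lambda}^{n+1/2})$, $$\mathbf{q}^{n+1}-\mathbf{q}^n=h\,\mathbf{v}^{n+1/2},$$ $$\mathbf{M}(\mathbf{v}^{n+1}-\mathbf{v}^n)=-h\,\nabla V(\mathbf{q}^{n+1/2})-h\,\nabla\mathbf{g}(\mathbf{q}^{n+1/2})^\top\boldsymbol{\lambda}^{n+1/2}+h\,\tilde{\mathbf{B}}(\mathbf{x}^{n+1/2})\mathbf{u}^{n+1/2},$$ $$\mathbf{0}=h\,\nabla\mathbf{g}(\mathbf{q}^{n+1/2})\mathbf{v}^{n+1/2}.$$ If $\mathbf{g}(\mathbf{q}^0)=\mathbf{0}$, then $\mathbf{g}(\mathbf{q}^n)=\mathbf{0}$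 for all $n=0,\dots,N$. *)

theory Defs
  imports "HOL-Analysis.Analysis"
begin

definition poly_deg_le2 :: "(real ^ 'n \<Rightarrow> real) \<Rightarrow> bool" where
  "poly_deg_le2 f \<longleftrightarrow>
     (\<exists>c::real. \<exists>b::real ^ 'n. \<exists>A::real ^ 'n ^ 'n. \<forall>x. f x = c + b \<bullet> x + x \<bullet> (A *v x))"

definition sym_pos_def_mat :: "real ^ 'n ^ 'n \<Rightarrow> bool" where
  "sym_pos_def_mat M \<longleftrightarrow> transpose M = M \<and> (\<forall>x. x \<noteq> 0 \<longrightarrow> x \<bullet> (M *v x) > 0)"

end

theory Submission
  imports Defs
begin

lemma quad_deriv:
  fixes A :: "real^'n^'n" and b :: "real^'n"
  shows "((\<lambda>x. c + b \<bullet> x + x \<bullet> (A *v x)) has_derivative (\<lambda>w. b \<bullet> w + (x \<bullet> (A *v w) + w \<bullet> (A *v x)))) (at x)"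
proof -
  have L: "((*v) A has_derivative (*v) A) (at x)"
    by (metis bounded_linear_imp_has_derivative matrix_vector_mul_bounded_linear)
  show ?thesis
    by (intro derivative_eq_intros L) (auto intro: bounded_linear_imp_has_derivative)
qed

lemma quad_mid:
  fixes A :: "real^'n^'n" and b :: "real^'n"
  shows "(c + b \<bullet> y + y \<bullet> (A *v y)) - (c + b \<bullet> x + x \<bullet> (A *v x)) =
     (let z = (1/2) *\<^sub>R (y + x) in b \<bullet> (y - x) + (z \<bullet> (A *v (y - x)) + (y - x) \<bullet> (A *v z)))"
  by (simp add: Let_def inner_diff_left inner_diff_right inner_add_left inner_add_right
      matrix_vector_right_distrib matrix_vector_mult_diff_distrib matrix_vector_mult_scaleR algebra_simps)

theorem mainTheorem3:
  fixes M :: "real ^ 'n ^ 'n"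
    and V :: "real ^ 'n \<Rightarrow> real"
    and gradV :: "real ^ 'n \<Rightarrow> real ^ 'n"
    and Bt :: "(real ^ 'n) \<times> (real ^ 'n) \<times> (real ^ 'm) \<Rightarrow> real ^ 'p ^ 'n"
    and g :: "real ^ 'n \<Rightarrow> real ^ 'm"
    and h :: real and N :: nat
    and q v :: "nat \<Rightarrow> real ^ 'n"
    and lam :: "nat \<Rightarrow> real ^ 'm"
    and u :: "nat \<Rightarrow> real ^ 'p"
  assumes M_spd: "sym_pos_def_mat M"
    and V_grad: "\<And>x. (V has_derivative (\<lambda>w. gradV x \<bullet> w)) (at x)"
    and V_C1: "continuous_on UNIV gradV"
    and g_quad: "\<And>i. poly_deg_le2 (\<lambda>x. g x $ i)"
    and h_pos: "h > 0"
    and eq_q: "\<And>k. k < N \<Longrightarrow> q (Suc k) - q k = h *\<^sub>R ((1/2) *\<^sub>R (v (Suc k) + v k))"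
    and eq_v: "\<And>k. k < N \<Longrightarrow>
       (let qh = (1/2) *\<^sub>R (q (Suc k) + q k);
            vh = (1/2) *\<^sub>R (v (Suc k) + v k);
            lh = (1/2) *\<^sub>R (lam (Suc k) + lam k)
        in M *v (v (Suc k) - v k) =
             - (h *\<^sub>R gradV qh)
             - h *\<^sub>R (transpose (jacobian g (at qh)) *v lh)
             + h *\<^sub>R (Bt (qh, vh, lh) *v u k))"
    and eq_c: "\<And>k. k < N \<Longrightarrow>
       h *\<^sub>R (jacobian g (at ((1/2) *\<^sub>R (q (Suc k) + q k))) *v ((1/2) *\<^sub>R (v (Suc k) + v k))) = 0"
    and init: "g (q 0) = 0"
  shows "\<forall>k\<le>N. g (q k) = 0"
proof -
  obtain c b A where cba: "\<And>i x. g x $ i = c i + b i \<bullet> x + x \<bullet> (A i *v x)"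
    using g_quad unfolding poly_deg_le2_def by metis
  define D where "D z w = (\<chi> i. b i \<bullet> w + (z \<bullet> (A i *v w) + w \<bullet> (A i *v z)))" for z w
  have gD: "(g has_derivative D z) (at z)" for z
  proof -
    have "\<forall>i\<in>Basis. ((\<lambda>x. g x \<bullet> i) has_derivative (\<lambda>x. D z x \<bullet> i)) (at z)"
    proof
      fix i :: "real^'m" assume "i \<in> Basis"
      then obtain j where j: "i = axis j 1" by (auto simp: Basis_vec_def)
      show "((\<lambda>x. g x \<bullet> i) has_derivative (\<lambda>x. D z x \<bullet> i)) (at z)"
        unfolding j inner_axis D_def cba using quad_deriv by simp
    qed
    then show ?thesis using has_derivative_componentwise_within[of g "D z" z UNIV] by simp
  qed
  have J: "jacobian g (at z) *v w = D z w" for z w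
  proof -
    have "g differentiable (at z)" using gD by (rule differentiableI)
    then have "(g has_derivative (\<lambda>h. jacobian g (at z) *v h)) (at z)" using jacobian_works by blast
    from has_derivative_unique[OF this gD] show ?thesis by metis
  qed
  have step: "g (q (Suc k)) = g (q k)" if k: "k < N" for k
  proof -
    let ?z = "(1/2) *\<^sub>R (q (Suc k) + q k)"
    let ?w = "(1/2) *\<^sub>R (v (Suc k) + v k)"
    have "D ?z ?w = 0" using eq_c[OF k] h_pos J by simp
    have lin: "D ?z (h *\<^sub>R ?w) = h *\<^sub>R D ?z ?w"
      by (simp add: D_def vec_eq_iff matrix_vector_mult_scaleR algebra_simps)
    have D0: "D ?z (q (Suc k) - q k) = 0"
      by (simp only: eq_q[OF k] lin \<open>D ?z ?w = 0\<close>) simp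
    have "g (q (Suc k)) $ i - g (q k) $ i = D ?z (q (Suc k) - q k) $ i" for i
      unfolding cba D_def quad_mid[unfolded Let_def] by simp
    then have "g (q (Suc k)) - g (q k) = 0"
      using D0 by (simp add: vec_eq_iff)
    then show ?thesis by simp
  qed
  have "k \<le> N \<longrightarrow> g (q k) = 0" for k
    by (induction k) (auto simp: init step)
  then show ?thesis by blast
qed

end
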